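(* Consider Model A with $\delta>-1$. There exists a constant $C'>0$ (depending only on $\delta$) such that $$\bigl|\mathbf E(N_{>k}(n))-np_{>k}\bigr|\le C'\qquad\text{for all } n\ge1,\ k\ge1.$$
   Context: Model A (with $\delta>-1$): $G(1)$ consists of a single node $v_1$ with a self loop (so $v_1$ has degree 2; a self loop contributes 2 to the degree). For $n\ge1$, given $G(n)$ (nodes $v_1,\dots,v_n$, $n$ edges), $G(n+1)$ is obtained by adding a new node $v_{n+1}$ and one edge joining $v_{n+1}$ to an existing node $v_i$, $1\le i\le n$, chosen with probability $\frac{D_i(n)+\delta}{(2+\delta)n}$, where $D_i(n)$ is the degree of $v_i$ in $G(n)$. $N_{>k}(n):=\#\{1\le i\le n: D_i(n)>k\}$ for $k\ge1$, $N_{>0}(n):=n$. For $k\ge0$, $$p_{>k}:=\frac{\Gamma(k+1+\delta)\,\Gamma(3+2\delta)}{\Gamma(k+3+2\delta)\,\Gamma(1+\delta)}.$$ *)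

theory Defs
  imports "HOL-Analysis.Analysis" "HOL-Probability.Probability"
begin

text \<open>Model A preferential attachment, tracked through its degree sequence.
  A state is the list ds of degrees, ds ! (i-1) = D_i(n), of length n (the number of nodes).\<close>

definition modelA_step :: "real \<Rightarrow> nat list \<Rightarrow> nat list pmf" where
  "modelA_step \<delta> ds =
     pmf_of_list
       (map (\<lambda>i. (ds[i := ds ! i + 1] @ [1],
                  (real (ds ! i) + \<delta>) / ((2 + \<delta>) * real (length ds))))
            [0..<length ds])"

text \<open>modelA_aux delta m is the degree sequence of G(m+1); G(1) is one node with a self loop (degree 2).\<close>
primrec modelA_aux :: "real \<Rightarrow> nat \<Rightarrow> nat list pmf" where
  "modelA_aux \<delta> 0 = return_pmf [2]"
| "modelA_aux \<delta> (Suc m) = modelA_aux \<delta> m \<bind> modelA_step \<delta>"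

definition modelA :: "real \<Rightarrow> nat \<Rightarrow> nat list pmf" where
  "modelA \<delta> n = modelA_aux \<delta> (n - 1)"

definition N_gt :: "nat \<Rightarrow> nat list \<Rightarrow> nat" where
  "N_gt k ds = card {i. i < length ds \<and> ds ! i > k}"

definition p_gt :: "real \<Rightarrow> nat \<Rightarrow> real" where
  "p_gt \<delta> k = Gamma (real k + 1 + \<delta>) * Gamma (3 + 2 * \<delta>)
              / (Gamma (real k + 3 + 2 * \<delta>) * Gamma (1 + \<delta>))"

end

theory Submission
  imports Defs
begin

definition SS :: "nat \<Rightarrow> nat list set" where
  "SS n = {ds. length ds = n \<and> set ds \<subseteq> {1..n+1} \<and> sum_list ds = 2*n}"

lemma finite_SS: "finite (SS n)"
  by (rule finite_subset[OF _ finite_lists_length_eq[of "{1..n+1}" n]]) (auto simp: SS_def)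

definition cnt :: "nat \<Rightarrow> nat list \<Rightarrow> real" where
  "cnt k ds = (\<Sum>j<length ds. if k < ds!j then 1 else 0)"

lemma card_filter_sum: "real (card {i. i < (n::nat) \<and> P i}) = (\<Sum>i<n. if P i then 1 else 0)"
proof (induction n)
  case 0 then show ?case by simp
next
  case (Suc n)
  show ?case
  proof (cases "P n")
    case True
    then have "{i. i < Suc n \<and> P i} = insert n {i. i < n \<and> P i}" by auto
    then show ?thesis using True Suc by simp
  next
    case False
    then have "{i. i < Suc n \<and> P i} = {i. i < n \<and> P i}" using less_Suc_eq by auto
    then show ?thesis using False Suc by simp
  qed
qed

lemma N_gt_cnt: "real (N_gt k ds) = cnt k ds"
  unfolding N_gt_def cnt_def by (rule card_filter_sum)

lemma exp_pmf_of_list_aux: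
  fixes f :: "'a \<Rightarrow> real"
  assumes "finite B" "set (map fst xs) \<subseteq> B"
  shows "(\<Sum>a\<in>B. sum_list (map snd (filter (\<lambda>z. fst z = a) xs)) * f a) = (\<Sum>z\<leftarrow>xs. snd z * f (fst z))"
  using assms(2)
proof (induction xs)
  case Nil then show ?case by simp
next
  case (Cons x xs)
  have "(\<Sum>a\<in>B. sum_list (map snd (filter (\<lambda>z. fst z = a) (x#xs))) * f a)
     = (\<Sum>a\<in>B. (if a = fst x then snd x * f a else 0) + sum_list (map snd (filter (\<lambda>z. fst z = a) xs)) * f a)"
    by (intro sum.cong) (auto simp: algebra_simps)
  also have "\<dots> = snd x * f (fst x) + (\<Sum>a\<in>B. sum_list (map snd (filter (\<lambda>z. fst z = a) xs)) * f a)"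
    using Cons.prems assms(1) by (simp add: sum.distrib)
  also have "\<dots> = snd x * f (fst x) + (\<Sum>z\<leftarrow>xs. snd z * f (fst z))"
    using Cons by simp
  finally show ?case by simp
qed

lemma exp_pmf_of_list:
  fixes f :: "'a \<Rightarrow> real"
  assumes "pmf_of_list_wf xs"
  shows "measure_pmf.expectation (pmf_of_list xs) f = (\<Sum>z\<leftarrow>xs. snd z * f (fst z))"
proof -
  have "measure_pmf.expectation (pmf_of_list xs) f = (\<Sum>a\<in>set (map fst xs). pmf (pmf_of_list xs) a *\<^sub>R f a)"
    using set_pmf_of_list[OF assms] by (intro integral_measure_pmf) auto
  also have "\<dots> = (\<Sum>a\<in>set (map fst xs). sum_list (map snd (filter (\<lambda>z. fst z = a) xs)) * f a)"
    by (simp add: pmf_pmf_of_list[OF assms])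
  also have "\<dots> = (\<Sum>z\<leftarrow>xs. snd z * f (fst z))"
    by (rule exp_pmf_of_list_aux) auto
  finally show ?thesis .
qed

lemma sum_real_nth: "(\<Sum>i<length ds. real (ds!i)) = real (sum_list ds)"
  by (simp add: sum_list_sum_nth atLeast0LessThan)

lemma wf_step:
  assumes "\<delta> > -1" "ds \<in> SS n" "n \<ge> 1"
  shows "pmf_of_list_wf (map (\<lambda>i. (ds[i := ds ! i + 1] @ [1],
                  (real (ds ! i) + \<delta>) / ((2 + \<delta>) * real (length ds)))) [0..<length ds])"
proof (rule pmf_of_list_wfI)
  have len: "length ds = n" and sl: "sum_list ds = 2*n" and st: "set ds \<subseteq> {1..n+1}"
    using assms(2) by (auto simp: SS_def)
  fix x assume "x \<in> set (map snd (map (\<lambda>i. (ds[i := ds ! i + 1] @ [1],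
                  (real (ds ! i) + \<delta>) / ((2 + \<delta>) * real (length ds)))) [0..<length ds]))"
  then obtain i where i: "i < n" and x: "x = (real (ds ! i) + \<delta>) / ((2 + \<delta>) * real n)"
    using len by auto
  have "ds ! i \<in> set ds" using i len by auto
  then have "ds ! i \<ge> 1" using st by auto
  then show "x \<ge> 0" unfolding x using assms(1,3) by (intro divide_nonneg_pos) auto
next
  have len: "length ds = n" and sl: "sum_list ds = 2*n"
    using assms(2) by (auto simp: SS_def)
  have "sum_list (map snd (map (\<lambda>i. (ds[i := ds ! i + 1] @ [1],
                  (real (ds ! i) + \<delta>) / ((2 + \<delta>) * real (length ds)))) [0..<length ds]))
      = (\<Sum>i<n. (real (ds ! i) + \<delta>) / ((2 + \<delta>) * real n))"
    using len by (simp add: sum_list_sum_nth atLeast0LessThan)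
  also have "\<dots> = (\<Sum>i<n. real (ds ! i) + \<delta>) / ((2 + \<delta>) * real n)"
    by (simp add: sum_divide_distrib)
  also have "(\<Sum>i<n. real (ds ! i) + \<delta>) = 2 * real n + real n * \<delta>"
    using sum_real_nth[of ds] len sl by (simp add: sum.distrib)
  finally have eq: "sum_list (map snd (map (\<lambda>i. (ds[i := ds ! i + 1] @ [1],
                  (real (ds ! i) + \<delta>) / ((2 + \<delta>) * real (length ds)))) [0..<length ds])) = (2 * real n + real n * \<delta>) / ((2 + \<delta>) * real n)" .
  have "(2+\<delta>) * real n > 0" using assms(1,3) by simp
  then show "sum_list (map snd (map (\<lambda>i. (ds[i := ds ! i + 1] @ [1],
                  (real (ds ! i) + \<delta>) / ((2 + \<delta>) * real (length ds)))) [0..<length ds])) = 1"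
    unfolding eq by (simp add: algebra_simps)
qed

lemma set_step:
  assumes "\<delta> > -1" "ds \<in> SS n" "n \<ge> 1"
  shows "set_pmf (modelA_step \<delta> ds) \<subseteq> SS (Suc n)"
proof
  have len: "length ds = n" and sl: "sum_list ds = 2*n" and st: "set ds \<subseteq> {1..n+1}"
    using assms(2) by (auto simp: SS_def)
  fix x assume "x \<in> set_pmf (modelA_step \<delta> ds)"
  then have "x \<in> set (map fst (map (\<lambda>i. (ds[i := ds ! i + 1] @ [1],
                  (real (ds ! i) + \<delta>) / ((2 + \<delta>) * real (length ds)))) [0..<length ds]))"
    using set_pmf_of_list[OF wf_step[OF assms]] unfolding modelA_step_def by blast
  then obtain i where i: "i < n" and x: "x = ds[i := ds ! i + 1] @ [1]" using len by auto
  have "ds ! i \<in> set ds" using i len by auto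
  then have di: "ds ! i \<le> n + 1" "ds!i \<ge> 1" using st by auto
  have "set (ds[i := ds ! i + 1]) \<subseteq> insert (ds!i+1) (set ds)" by (rule set_update_subset_insert)
  moreover have "\<forall>y\<in>insert (ds!i+1) (set ds) \<union> {1}. y\<in>{1..Suc n+1}" using st di by auto
  ultimately have "set x \<subseteq> {1..Suc n+1}" unfolding x by auto
  moreover have "sum_list x = 2 * Suc n" unfolding x using sum_list_update[of i ds "ds!i+1"] i len sl by simp
  moreover have "length x = Suc n" using x len by simp
  ultimately show "x \<in> SS (Suc n)" by (simp add: SS_def)
qed

lemma set_aux:
  assumes "\<delta> > -1"
  shows "set_pmf (modelA_aux \<delta> m) \<subseteq> SS (Suc m)"
proof (induction m)
  case 0 then show ?case by (simp add: SS_def)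
next
  case (Suc m)
  then show ?case using set_step[OF assms, of _ "Suc m"] by auto
qed

lemma set_modelA:
  assumes "\<delta> > -1" "n \<ge> 1"
  shows "set_pmf (modelA \<delta> n) \<subseteq> SS n"
  using set_aux[OF assms(1), of "n-1"] assms(2) by (simp add: modelA_def)

lemma cnt_snoc1: "k \<ge> 1 \<Longrightarrow> cnt k (xs @ [1]) = cnt k xs"
  unfolding cnt_def by (simp add: nth_append)

lemma cnt_update:
  assumes "i < length ds" "k \<ge> 1"
  shows "cnt k (ds[i := ds!i + 1] @ [1]) = cnt k ds + (if ds!i = k then 1 else 0)"
proof -
  have "cnt k (ds[i := ds!i + 1]) = (\<Sum>j<length ds. (if k < ds!j then 1 else 0) +
          (if j = i then (if ds!i = k then 1 else 0) else 0))"
    unfolding cnt_def by (intro sum.cong) (auto simp: nth_list_update)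
  also have "\<dots> = cnt k ds + (if ds!i = k then 1 else 0)"
    using assms(1) by (simp add: sum.distrib cnt_def)
  finally show ?thesis using cnt_snoc1[OF assms(2)] by simp
qed

lemma cnt_diff:
  assumes "k \<ge> 1"
  shows "cnt (k-1) ds - cnt k ds = (\<Sum>j<length ds. if ds!j = k then 1 else 0)"
  unfolding cnt_def sum_subtractf[symmetric] using assms by (intro sum.cong) auto

lemma exp_step:
  assumes "\<delta> > -1" "ds \<in> SS n" "n \<ge> 1" "k \<ge> 1"
  shows "measure_pmf.expectation (modelA_step \<delta> ds) (cnt k)
       = cnt k ds + (real k + \<delta>) / ((2 + \<delta>) * real n) * (cnt (k-1) ds - cnt k ds)"
proof -
  have len: "length ds = n" using assms(2) by (simp add: SS_def)
  define w where "w i = (real (ds ! i) + \<delta>) / ((2 + \<delta>) * real n)" for i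
  have wsum: "(\<Sum>i<n. w i) = 1"
    using wf_step[OF assms(1-3)] len
    by (simp add: pmf_of_list_wf_def sum_list_sum_nth atLeast0LessThan w_def)
  define c where "c = (real k + \<delta>) / ((2 + \<delta>) * real n)"
  have wc: "w i = c" if "ds!i = k" for i using that by (simp add: w_def c_def)
  have "measure_pmf.expectation (modelA_step \<delta> ds) (cnt k) = (\<Sum>i<n. w i * cnt k (ds[i := ds!i + 1] @ [1]))"
    unfolding modelA_step_def using len
    by (subst exp_pmf_of_list[OF wf_step[OF assms(1-3)]])
       (simp add: sum_list_sum_nth atLeast0LessThan w_def)
  also have "\<dots> = (\<Sum>i<n. w i * cnt k ds + c * (if ds!i = k then 1 else 0))"
  proof (intro sum.cong refl)
    fix i assume "i \<in> {..<n}"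
    then have "cnt k (ds[i := ds!i + 1] @ [1]) = cnt k ds + (if ds!i = k then 1 else 0)"
      using len assms(4) by (intro cnt_update) auto
    then show "w i * cnt k (ds[i := ds!i + 1] @ [1]) = w i * cnt k ds + c * (if ds!i = k then 1 else 0)"
      by (cases "ds!i = k") (simp_all add: wc ring_distribs)
  qed
  also have "\<dots> = cnt k ds * (\<Sum>i<n. w i) + c * (\<Sum>i<n. if ds!i = k then 1 else 0)"
    by (simp add: sum.distrib sum_distrib_left sum_distrib_right mult.commute)
  also have "\<dots> = cnt k ds + c * (\<Sum>i<n. if ds!i = k then 1 else 0)"
    by (simp add: wsum)
  also have "(\<Sum>i<n. if ds!i = k then 1 else 0) = cnt (k-1) ds - cnt k ds"
    using cnt_diff[OF assms(4), of ds] len by simp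
  finally show ?thesis unfolding c_def .
qed

definition aa :: "real \<Rightarrow> nat \<Rightarrow> nat \<Rightarrow> real" where
  "aa \<delta> k n = measure_pmf.expectation (modelA \<delta> n) (cnt k)"

lemma aa_sum:
  assumes "\<delta> > -1" "n \<ge> 1"
  shows "aa \<delta> k n = (\<Sum>ds\<in>SS n. pmf (modelA \<delta> n) ds * cnt k ds)"
  unfolding aa_def using set_modelA[OF assms] finite_SS
  by (subst integral_measure_pmf[of "SS n"]) auto

lemma modelA_Suc:
  assumes "n \<ge> 1"
  shows "modelA \<delta> (Suc n) = modelA \<delta> n \<bind> modelA_step \<delta>"
  using assms by (cases n) (auto simp: modelA_def)

lemma aa_rec:
  assumes "\<delta> > -1" "n \<ge> 1" "k \<ge> 1"
  shows "aa \<delta> k (Suc n) = aa \<delta> k n + (real k + \<delta>) / ((2 + \<delta>) * real n) * (aa \<delta> (k-1) n - aa \<delta> k n)"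
proof -
  define c where "c = (real k + \<delta>) / ((2 + \<delta>) * real n)"
  have "aa \<delta> k (Suc n) = (\<Sum>ds\<in>SS n. pmf (modelA \<delta> n) ds *\<^sub>R measure_pmf.expectation (modelA_step \<delta> ds) (cnt k))"
    unfolding aa_def modelA_Suc[OF assms(2)]
    using finite_SS set_modelA[OF assms(1,2)] finite_set_pmf_of_list[OF wf_step[OF assms(1) _ assms(2)]]
    by (intro pmf_expectation_bind) (auto simp: modelA_step_def)
  also have "\<dots> = (\<Sum>ds\<in>SS n. pmf (modelA \<delta> n) ds * cnt k ds + c * (pmf (modelA \<delta> n) ds * cnt (k-1) ds - pmf (modelA \<delta> n) ds * cnt k ds))"
  proof (intro sum.cong refl)
    fix ds assume "ds \<in> SS n"
    then have eq: "measure_pmf.expectation (modelA_step \<delta> ds) (cnt k) = cnt k ds + c * (cnt (k-1) ds - cnt k ds)"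
      using exp_step[OF assms(1) _ assms(2,3)] unfolding c_def by blast
    show "pmf (modelA \<delta> n) ds *\<^sub>R measure_pmf.expectation (modelA_step \<delta> ds) (cnt k) =
      pmf (modelA \<delta> n) ds * cnt k ds + c * (pmf (modelA \<delta> n) ds * cnt (k-1) ds - pmf (modelA \<delta> n) ds * cnt k ds)"
      unfolding eq by (simp add: algebra_simps)
  qed
  also have "\<dots> = aa \<delta> k n + c * (aa \<delta> (k-1) n - aa \<delta> k n)"
    unfolding aa_sum[OF assms(1,2)] by (simp add: sum.distrib sum_distrib_left[symmetric] sum_subtractf)
  finally show ?thesis unfolding c_def .
qed

lemma aa_zero:
  assumes "\<delta> > -1" "n \<ge> 1"
  shows "aa \<delta> 0 n = real n"
proof -
  have "aa \<delta> 0 n = (\<Sum>ds\<in>SS n. pmf (modelA \<delta> n) ds * real n)"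
    unfolding aa_sum[OF assms]
  proof (intro sum.cong refl)
    fix ds assume "ds \<in> SS n"
    then have "length ds = n" "set ds \<subseteq> {1..n+1}" by (auto simp: SS_def)
    then have "cnt 0 ds = real n" unfolding cnt_def
      by (simp add: Suc_le_eq subset_iff)
    then show "pmf (modelA \<delta> n) ds * cnt 0 ds = pmf (modelA \<delta> n) ds * real n" by simp
  qed
  also have "\<dots> = real n" using sum_pmf_eq_1[OF finite_SS set_modelA[OF assms]]
    by (simp add: sum_distrib_right[symmetric])
  finally show ?thesis .
qed

lemma aa_big:
  assumes "\<delta> > -1" "n \<ge> 1" "k \<ge> n + 1"
  shows "aa \<delta> k n = 0"
proof -
  have "aa \<delta> k n = (\<Sum>ds\<in>SS n. pmf (modelA \<delta> n) ds * 0)"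
    unfolding aa_sum[OF assms(1,2)]
  proof (intro sum.cong refl)
    fix ds assume "ds \<in> SS n"
    then have "length ds = n" "set ds \<subseteq> {1..n+1}" by (auto simp: SS_def)
    then have "\<forall>j<length ds. ds!j \<le> k" using assms(3) by (auto dest!: nth_mem)
    then have "cnt k ds = 0" unfolding cnt_def by (intro sum.neutral) (auto simp: not_less)
    then show "pmf (modelA \<delta> n) ds * cnt k ds = pmf (modelA \<delta> n) ds * 0" by simp
  qed
  then show ?thesis by simp
qed

lemma aa_one: "aa \<delta> k 1 = (if k < 2 then 1 else 0)"
  by (simp add: aa_def modelA_def cnt_def)

lemma Gamma_plus1_pos: "(z::real) > 0 \<Longrightarrow> Gamma (z + 1) = z * Gamma z"
  by (rule Gamma_plus1) (use nonpos_Ints_nonpos[of z] in force)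

lemma P_Suc:
  assumes "\<delta> > -1"
  shows "p_gt \<delta> (Suc j) = (real j + 1 + \<delta>) / (real j + 3 + 2 * \<delta>) * p_gt \<delta> j"
proof -
  have e1: "Gamma (real (Suc j) + 1 + \<delta>) = (real j + 1 + \<delta>) * Gamma (real j + 1 + \<delta>)"
    using Gamma_plus1_pos[of "real j + 1 + \<delta>"] assms by (simp add: algebra_simps)
  have e2: "Gamma (real (Suc j) + 3 + 2 * \<delta>) = (real j + 3 + 2 * \<delta>) * Gamma (real j + 3 + 2 * \<delta>)"
    using Gamma_plus1_pos[of "real j + 3 + 2 * \<delta>"] assms by (simp add: algebra_simps)
  have "Gamma (real j + 3 + 2 * \<delta>) > 0" "Gamma (1 + \<delta>) > 0" "real j + 3 + 2 * \<delta> > 0"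
    using assms by auto
  then show ?thesis unfolding p_gt_def e1 e2 by (simp add: field_simps)
qed

lemma P_0: "\<delta> > -1 \<Longrightarrow> p_gt \<delta> 0 = 1"
proof -
  assume a: "\<delta> > -1"
  have "Gamma (3 + 2 * \<delta>) > 0" "Gamma (1 + \<delta>) > 0" using a by auto
  then show ?thesis unfolding p_gt_def by (simp add: add.commute)
qed

lemma P_pos: "\<delta> > -1 \<Longrightarrow> p_gt \<delta> k > 0"
  unfolding p_gt_def by (intro divide_pos_pos mult_pos_pos Gamma_real_pos) auto

lemma P_rec:
  assumes "\<delta> > -1" "k \<ge> 1"
  shows "(2 + \<delta>) * p_gt \<delta> k = (real k + \<delta>) * (p_gt \<delta> (k-1) - p_gt \<delta> k)"
proof -
  obtain j where k: "k = Suc j" using assms(2) by (cases k) auto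
  have "real j + 3 + 2 * \<delta> > 0" using assms by auto
  then show ?thesis unfolding k P_Suc[OF assms(1)] by (simp add: field_simps)
qed

lemma P_bound: "\<delta> > -1 \<Longrightarrow> (real k + 1 + \<delta>) * p_gt \<delta> k \<le> 1 + \<delta>"
proof (induction k)
  case 0 then show ?case by (simp add: P_0)
next
  case (Suc j)
  have pos: "real j + 3 + 2 * \<delta> > 0" "real j + 1 + \<delta> > 0" using Suc.prems by auto
  have "(real (Suc j) + 1 + \<delta>) * p_gt \<delta> (Suc j)
      = (real j + 2 + \<delta>) / (real j + 3 + 2 * \<delta>) * ((real j + 1 + \<delta>) * p_gt \<delta> j)"
    unfolding P_Suc[OF Suc.prems] by (simp add: algebra_simps)
  also have "\<dots> \<le> 1 * ((real j + 1 + \<delta>) * p_gt \<delta> j)"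
    using pos P_pos[OF Suc.prems, of j] Suc.prems
    by (intro mult_right_mono) (auto simp: divide_le_eq)
  also have "\<dots> \<le> 1 + \<delta>" using Suc by simp
  finally show ?case .
qed

lemma main_bound:
  assumes "\<delta> > -1" "n \<ge> 1"
  shows "\<bar>aa \<delta> k n - real n * p_gt \<delta> k\<bar> \<le> 2"
  using assms(2)
proof (induction n arbitrary: k rule: dec_induct)
  case base
  have pp: "p_gt \<delta> k > 0" by (rule P_pos[OF assms(1)])
  have "(1+\<delta>)*p_gt \<delta> k \<le> (real k+1+\<delta>)*p_gt \<delta> k"
    using pp by (intro mult_right_mono) auto
  then have "(1+\<delta>)*p_gt \<delta> k \<le> (1+\<delta>)*1" using P_bound[OF assms(1), of k] by simp
  then have "p_gt \<delta> k \<le> 1" using assms(1) by (simp add: mult_le_cancel_left_pos)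
  then show ?case using pp aa_one[of \<delta> k] by simp
next
  case (step n)
  show ?case
  proof (cases "k = 0")
    case True
    then show ?thesis using aa_zero[OF assms(1)] step P_0[OF assms(1)] by simp
  next
    case False
    then have k1: "k \<ge> 1" by simp
    define c where "c = (real k + \<delta>) / ((2 + \<delta>) * real n)"
    have n0: "real n \<ge> 1" using step by simp
    show ?thesis
    proof (cases "c \<le> 1")
      case True
      have c0: "c \<ge> 0" unfolding c_def using assms(1) k1 n0 by (intro divide_nonneg_pos) auto
      have d0: "2 + \<delta> \<noteq> 0" using assms(1) by simp
      have nn: "real n \<noteq> 0" using n0 by simp
      have cn: "c * real n = (real k + \<delta>) / (2 + \<delta>)"
        unfolding c_def using nn d0 by simp
      have "p_gt \<delta> k = ((real k + \<delta>) * (p_gt \<delta> (k-1) - p_gt \<delta> k)) / (2 + \<delta>)"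
        using P_rec[OF assms(1) k1] d0 by (simp add: eq_divide_eq mult.commute)
      then have Pr: "p_gt \<delta> k = c * real n * (p_gt \<delta> (k-1) - p_gt \<delta> k)"
        unfolding cn by simp
      have eqE: "aa \<delta> k (Suc n) - real (Suc n) * p_gt \<delta> k
          = (1 - c) * (aa \<delta> k n - real n * p_gt \<delta> k) + c * (aa \<delta> (k-1) n - real n * p_gt \<delta> (k-1))"
      proof -
        have "(aa \<delta> k n + c * (aa \<delta> (k-1) n - aa \<delta> k n) - real (Suc n) * p_gt \<delta> k)
          - ((1 - c) * (aa \<delta> k n - real n * p_gt \<delta> k) + c * (aa \<delta> (k-1) n - real n * p_gt \<delta> (k-1)))
          = c * real n * (p_gt \<delta> (k-1) - p_gt \<delta> k) - p_gt \<delta> k"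
          by (simp add: algebra_simps)
        then show ?thesis unfolding aa_rec[OF assms(1) step(1) k1, folded c_def] using Pr by linarith
      qed
      moreover have "\<bar>(1 - c) * (aa \<delta> k n - real n * p_gt \<delta> k)\<bar> \<le> (1 - c) * 2"
      proof -
        have "(1 - c) * \<bar>aa \<delta> k n - real n * p_gt \<delta> k\<bar> \<le> (1 - c) * 2"
          by (rule mult_left_mono) (use step.IH[of k] True in auto)
        then show ?thesis using True by (simp add: abs_mult)
      qed
      moreover have "\<bar>c * (aa \<delta> (k-1) n - real n * p_gt \<delta> (k-1))\<bar> \<le> c * 2"
      proof -
        have "c * \<bar>aa \<delta> (k-1) n - real n * p_gt \<delta> (k-1)\<bar> \<le> c * 2"
          by (rule mult_left_mono) (use step.IH[of "k-1"] c0 in auto)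
        then show ?thesis using c0 by (simp add: abs_mult)
      qed
      moreover have "\<bar>(1 - c) * (aa \<delta> k n - real n * p_gt \<delta> k) + c * (aa \<delta> (k-1) n - real n * p_gt \<delta> (k-1))\<bar>
         \<le> \<bar>(1 - c) * (aa \<delta> k n - real n * p_gt \<delta> k)\<bar> + \<bar>c * (aa \<delta> (k-1) n - real n * p_gt \<delta> (k-1))\<bar>"
        by (rule abs_triangle_ineq)
      moreover have "(1 - c) * 2 + c * 2 = (2::real)" by (simp add: algebra_simps)
      ultimately show ?thesis unfolding eqE by linarith
    next
      case False
      moreover have "(2 + \<delta>) * real n > 0" using assms(1) n0 by simp
      ultimately have "real k + \<delta> > (2 + \<delta>) * real n"
        unfolding c_def using less_divide_eq_1_pos by (metis not_le)
      then have kbig: "real k + \<delta> > 2 * real n + \<delta> * real n" by (simp add: algebra_simps)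
      have "\<delta> * real n \<ge> \<delta> - (real n - 1)"
      proof -
        have "(\<delta> + 1) * (real n - 1) \<ge> 0" using assms(1) n0 by simp
        then show ?thesis by (simp add: algebra_simps)
      qed
      with kbig have "real k > real n + 1" by linarith
      then have "k \<ge> Suc n + 1" by linarith
      then have a0: "aa \<delta> k (Suc n) = 0" using aa_big[OF assms(1)] by simp
      have Pb: "(real k + 1 + \<delta>) * p_gt \<delta> k \<le> 1 + \<delta>" by (rule P_bound[OF assms(1)])
      have pp: "p_gt \<delta> k > 0" by (rule P_pos[OF assms(1)])
      have "real (Suc n) * (1 + \<delta>) \<le> 2 * (real k + 1 + \<delta>)"
      proof -
        have "(1 + \<delta>) * (real n - 1) \<ge> 0" using assms(1) n0 by simp
        then show ?thesis using kbig by (simp add: algebra_simps)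
      qed
      moreover have "real (Suc n) * ((real k + 1 + \<delta>) * p_gt \<delta> k) \<le> real (Suc n) * (1 + \<delta>)"
        using Pb by (intro mult_left_mono) auto
      ultimately have "(real k + 1 + \<delta>) * (real (Suc n) * p_gt \<delta> k) \<le> (real k + 1 + \<delta>) * 2"
        by (simp add: algebra_simps)
      moreover have "real k + 1 + \<delta> > 0" using assms(1) by simp
      ultimately have "real (Suc n) * p_gt \<delta> k \<le> 2"
        using mult_le_cancel_left_pos[of "real k + 1 + \<delta>" "real (Suc n) * p_gt \<delta> k" 2] by blast
      then show ?thesis using a0 pp by simp
    qed
  qed
qed

theorem mainTheorem7:
  fixes \<delta> :: real
  assumes "\<delta> > -1"
  shows "\<exists>C'>0. \<forall>n\<ge>1. \<forall>k\<ge>1.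
           \<bar>measure_pmf.expectation (modelA \<delta> n) (\<lambda>ds. real (N_gt k ds)) - real n * p_gt \<delta> k\<bar> \<le> C'"
proof (intro exI[of _ 2] conjI allI impI)
  fix n k :: nat assume "n \<ge> 1" "k \<ge> 1"
  then show "\<bar>measure_pmf.expectation (modelA \<delta> n) (\<lambda>ds. real (N_gt k ds)) - real n * p_gt \<delta> k\<bar> \<le> 2"
    using main_bound[OF assms] by (simp add: N_gt_cnt aa_def)
qed simp

end
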